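(* Let $k\in\mathbb{N}$, let $q>1$, and let $\tilde\chi_q$ be a modified character modulo $q$. Let $I_k=\{n+1,\dots,n+k\}$ (with $n\ge0$) be a block of $k$ consecutive positive integers and let $r=\#\{m\in I_k:\tilde\chi_q(m)=-1\}$. Let $P_r=\{p_1,\dots,p_r\}$ be any set of $r$ distinct primes with $p_i>k$ and $p_i\nmid q$ for all $i$, and define $f(m)=\tilde\chi_q(m)\lambda_{P_r}(m)$. Then there exists $n'\in\mathbb{N}\cup\{0\}$ such that $f(n'+1)=f(n'+2)=\cdots=f(n'+k)=+1$.
   Context: For a real Dirichlet character $\chi_q$ modulo $q>1$, a modified character $\tilde\chi_q$ is the completely multiplicative function $\mathbb{N}\to\{+1,-1\}$ with $\tilde\chi_q(p)=\chi_q(p)$ for primes $p\nmid q$ and $\tilde\chi_q(p)=\eta(p)\in\{+1,-1\}$ (an arbitrary sign) for primes $p\mid q$. For a set $S$ of primes, $\lambda_S$ is the completely multiplicative function with $\lambda_S(p)=-1$ if $p\in S$ and $\lambda_S(p)=+1$ for primes $p\notin S$. *)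

theory Defs
  imports "HOL-Computational_Algebra.Computational_Algebra"
begin

definition real_dirichlet_char :: "nat \<Rightarrow> (nat \<Rightarrow> real) \<Rightarrow> bool" where
  "real_dirichlet_char q \<chi> \<longleftrightarrow>
     \<chi> 1 = 1 \<and>
     (\<forall>m n. \<chi> (m * n) = \<chi> m * \<chi> n) \<and>
     (\<forall>n. \<chi> (n + q) = \<chi> n) \<and>
     (\<forall>n. \<chi> n = 0 \<longleftrightarrow> \<not> coprime n q)"

definition modified_char :: "nat \<Rightarrow> (nat \<Rightarrow> real) \<Rightarrow> (nat \<Rightarrow> real) \<Rightarrow> bool" where
  "modified_char q \<chi> \<chi>t \<longleftrightarrow>
     \<chi>t 1 = 1 \<and>
     (\<forall>m n. m > 0 \<longrightarrow> n > 0 \<longrightarrow> \<chi>t (m * n) = \<chi>t m * \<chi>t n) \<and>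
     (\<forall>p. prime p \<longrightarrow> \<not> p dvd q \<longrightarrow> \<chi>t p = \<chi> p) \<and>
     (\<forall>p. prime p \<longrightarrow> p dvd q \<longrightarrow> \<chi>t p \<in> {1, -1})"

definition lambda_S :: "nat set \<Rightarrow> nat \<Rightarrow> real" where
  "lambda_S S n = (-1) ^ size (filter_mset (\<lambda>p. p \<in> S) (prime_factorization n))"

end

theory Submission
  imports Defs "HOL-Number_Theory.Number_Theory"
begin

lemma coprime_shift: "coprime (m::nat) q \<Longrightarrow> Q = q * s \<Longrightarrow> coprime (m + t * Q) q"
proof -
  assume a: "coprime (m::nat) q" "Q = q * s"
  have g: "gcd q ((t*s) * q + m) = gcd q m" by (rule gcd_add_mult)
  have e: "m + t * Q = (t*s) * q + m" using a(2) by (simp add: algebra_simps)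
  have "gcd (m + t*Q) q = gcd q ((t*s) * q + m)" unfolding e by (rule gcd.commute)
  also have "\<dots> = gcd q m" by (rule g)
  also have "\<dots> = gcd m q" by (rule gcd.commute)
  finally have "gcd (m + t*Q) q = gcd m q" .
  moreover have "gcd m q = 1" using a(1) by (rule coprime_imp_gcd_eq_1)
  ultimately show ?thesis by (simp only: coprime_iff_gcd_eq_1)
qed


lemma chi_periodic:
  assumes "real_dirichlet_char q \<chi>"
  shows "\<chi> (a + t * q) = \<chi> a"
proof (induction t)
  case 0 then show ?case by simp
next
  case (Suc t)
  have "\<chi> (a + Suc t * q) = \<chi> ((a + t*q) + q)" by (simp add: algebra_simps)
  also have "\<dots> = \<chi> (a + t*q)" using assms unfolding real_dirichlet_char_def by blast
  finally show ?case using Suc by simp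
qed

lemma chi_mod:
  assumes "real_dirichlet_char q \<chi>"
  shows "\<chi> a = \<chi> (a mod q)"
  using chi_periodic[OF assms, of "a mod q" "a div q"] by (simp add: add.commute)

lemma chi_pow:
  assumes "real_dirichlet_char q \<chi>"
  shows "\<chi> (a ^ e) = \<chi> a ^ e"
  using assms unfolding real_dirichlet_char_def by (induction e) auto

lemma chi_unit:
  assumes "real_dirichlet_char q \<chi>" "q > 1" "coprime a q"
  shows "\<chi> a = 1 \<or> \<chi> a = -1"
proof -
  have c: "[a ^ totient q = 1] (mod q)" using euler_theorem[OF assms(3)] .
  have "\<chi> (a ^ totient q) = \<chi> 1"
    using chi_mod[OF assms(1), of "a ^ totient q"] chi_mod[OF assms(1), of 1] c
    unfolding cong_def by simp
  hence "\<chi> a ^ totient q = 1"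
    using chi_pow[OF assms(1)] assms(1) unfolding real_dirichlet_char_def by simp
  moreover have "totient q > 0" using assms(2) by simp
  ultimately have "\<bar>\<chi> a\<bar> ^ totient q = 1" "totient q > 0" by (metis power_abs abs_1)+
  hence "\<bar>\<chi> a\<bar> = 1"
    using power_eq_imp_eq_base[of "\<bar>\<chi> a\<bar>" "totient q" 1] by simp
  thus ?thesis by linarith
qed

lemma prime_split:
  assumes "m > (1::nat)"
  obtains p m' where "prime p" "m = p * m'" "m' < m" "m' > 0"
proof -
  have "m \<noteq> 1" using assms by simp
  then obtain p where p: "prime p" "p dvd m" using prime_factor_nat by blast
  then obtain m' where m: "m = p * m'" by blast
  have "m' > 0" using m assms by (cases m') auto
  moreover have "1 * m' < p * m'" using prime_gt_1_nat[OF p(1)] \<open>m' > 0\<close> by (rule mult_strict_right_mono)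
  hence "m' < m" using m by simp
  ultimately show ?thesis using that p m by blast
qed

lemma ncop_prime:
  assumes "(m::nat) > 0" "\<not> coprime m q"
  shows "\<exists>p. prime p \<and> p dvd m \<and> p dvd q"
proof -
  have "gcd m q \<noteq> 1" using assms(2) coprime_iff_gcd_eq_1 by blast
  then obtain p where p: "prime p" "p dvd gcd m q" using prime_factor_nat by blast
  have "p dvd m" by (rule dvd_trans[OF p(2) gcd_dvd1])
  moreover have "p dvd q" by (rule dvd_trans[OF p(2) gcd_dvd2])
  ultimately show ?thesis using p(1) by blast
qed

lemma chit_coprime:
  assumes d: "real_dirichlet_char q \<chi>" and mc: "modified_char q \<chi> \<chi>t"
  shows "v > 0 \<Longrightarrow> coprime v q \<Longrightarrow> \<chi>t v = \<chi> v"
proof (induction v rule: less_induct)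
  case (less v)
  show ?case
  proof (cases "v = 1")
    case True then show ?thesis using d mc unfolding real_dirichlet_char_def modified_char_def by simp
  next
    case False
    then obtain p v' where pv: "prime p" "v = p * v'" "v' < v" "v' > 0"
      using prime_split[of v] less.prems by (metis less_one nat_neq_iff)
    have cp: "coprime p q" "coprime v' q" using less.prems(2) pv(2) by auto
    have np: "\<not> p dvd q" using cp(1) pv(1)
      by (metis coprime_absorb_left not_prime_unit)
    have "\<chi>t v = \<chi>t p * \<chi>t v'" using mc pv prime_gt_0_nat unfolding modified_char_def by blast
    also have "\<dots> = \<chi> p * \<chi> v'" using less.IH[OF pv(3) pv(4) cp(2)] mc pv(1) np
      unfolding modified_char_def by simp
    also have "\<dots> = \<chi> v" using d pv(2) unfolding real_dirichlet_char_def by simp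
    finally show ?thesis .
  qed
qed

lemma chit_sign:
  assumes d: "real_dirichlet_char q \<chi>" and mc: "modified_char q \<chi> \<chi>t" and q: "q > 1"
  shows "m > 0 \<Longrightarrow> \<chi>t m = 1 \<or> \<chi>t m = -1"
proof (induction m rule: less_induct)
  case (less m)
  show ?case
  proof (cases "m = 1")
    case True then show ?thesis using mc unfolding modified_char_def by simp
  next
    case False
    then obtain p v' where pv: "prime p" "m = p * v'" "v' < m" "v' > 0"
      using prime_split[of m] less.prems by (metis less_one nat_neq_iff)
    have e: "\<chi>t m = \<chi>t p * \<chi>t v'" using mc pv prime_gt_0_nat unfolding modified_char_def by blast
    have "\<chi>t p = 1 \<or> \<chi>t p = -1"
    proof (cases "p dvd q")
      case True then show ?thesis using mc pv(1) unfolding modified_char_def by simp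
    next
      case False
      hence "coprime p q" using pv(1) prime_imp_coprime by blast
      then show ?thesis using chit_coprime[OF d mc, of p] chi_unit[OF d q] pv(1) prime_gt_0_nat by simp
    qed
    then show ?thesis using e less.IH[OF pv(3) pv(4)] by auto
  qed
qed

lemma chit_shift:
  assumes d: "real_dirichlet_char q \<chi>" and mc: "modified_char q \<chi> \<chi>t"
  shows "m > 0 \<Longrightarrow> coprime c q \<Longrightarrow> m * q dvd Q * c \<Longrightarrow> \<chi>t (m + t * Q) = \<chi>t m"
proof (induction m arbitrary: Q rule: less_induct)
  case (less m)
  show ?case
  proof (cases "coprime m q")
    case True
    have "q dvd Q * c" using less.prems(3) by (rule dvd_mult_right)
    moreover have "coprime q c" using less.prems(2) by (simp add: coprime_commute)
    ultimately have "q dvd Q" using coprime_dvd_mult_left_iff[of q c Q] by blast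
    then obtain s where s: "Q = q * s" by blast
    have cm: "coprime (m + t * Q) q" using coprime_shift[OF True s] .
    have "\<chi>t (m + t * Q) = \<chi> (m + t * Q)" using chit_coprime[OF d mc] cm less.prems(1) by simp
    also have "\<dots> = \<chi> (m + (t*s) * q)" using s by (simp add: algebra_simps)
    also have "\<dots> = \<chi> m" using chi_periodic[OF d] by blast
    also have "\<dots> = \<chi>t m" using chit_coprime[OF d mc] True less.prems(1) by simp
    finally show ?thesis .
  next
    case False
    then obtain p where p: "prime p" "p dvd m" "p dvd q"
      using ncop_prime[OF less.prems(1)] by blast
    then obtain m' where m': "m = p * m'" by blast
    have m'pos: "m' > 0" using m' less.prems(1) by (cases m') auto
    have "1 * m' < p * m'" using prime_gt_1_nat[OF p(1)] m'pos by (rule mult_strict_right_mono)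
    hence m'lt: "m' < m" using m' by simp
    have "p dvd Q * c" by (rule dvd_trans[OF p(2) dvd_trans[OF dvd_triv_left less.prems(3)]])
    moreover obtain q0 where "q = p * q0" using p(3) by blast
    hence "coprime c p" using less.prems(2) by simp
    hence "coprime p c" by (simp add: coprime_commute)
    ultimately have "p dvd Q" using coprime_dvd_mult_left_iff[of p c Q] by blast
    then obtain Q' where Q': "Q = p * Q'" by blast
    have "p * (m' * q) dvd p * (Q' * c)" using less.prems(3) m' Q' by (simp add: algebra_simps)
    hence dv: "m' * q dvd Q' * c" using p(1) prime_gt_0_nat by (simp add: mult.assoc)
    have ih: "\<chi>t (m' + t * Q') = \<chi>t m'" using less.IH[OF m'lt m'pos less.prems(2) dv] .
    have "m + t * Q = p * (m' + t * Q')" using m' Q' by (simp add: algebra_simps)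
    hence "\<chi>t (m + t * Q) = \<chi>t p * \<chi>t (m' + t * Q')"
      using mc m'pos p(1) prime_gt_0_nat unfolding modified_char_def by simp
    also have "\<dots> = \<chi>t p * \<chi>t m'" using ih by simp
    also have "\<dots> = \<chi>t m" using mc m'pos p(1) prime_gt_0_nat m' unfolding modified_char_def by simp
    finally show ?thesis .
  qed
qed

lemma exists_Ec:
  assumes "q > (0::nat)"
  shows "m > 0 \<Longrightarrow> \<exists>E c. coprime c q \<and> m dvd q ^ E * c"
proof (induction m rule: less_induct)
  case (less m)
  show ?case
  proof (cases "coprime m q")
    case True then show ?thesis by (intro exI[of _ 0] exI[of _ m]) simp
  next
    case False
    then obtain p where p: "prime p" "p dvd m" "p dvd q"
      using ncop_prime[OF less.prems(1)] by blast
    then obtain m' where m': "m = p * m'" by blast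
    have m'pos: "m' > 0" using m' less.prems(1) by (cases m') auto
    have "1 * m' < p * m'" using prime_gt_1_nat[OF p(1)] m'pos by (rule mult_strict_right_mono)
    hence m'lt: "m' < m" using m' by simp
    obtain E c where Ec: "coprime c q" "m' dvd q ^ E * c" using less.IH[OF m'lt m'pos] by blast
    have "m dvd q * (q ^ E * c)" using m' Ec(2) p(3) by (simp add: mult_dvd_mono)
    thus ?thesis using Ec(1) by (intro exI[of _ "Suc E"] exI[of _ c]) (simp add: algebra_simps)
  qed
qed



lemma lambda_none:
  assumes "\<forall>p\<in>S. \<not> p dvd m"
  shows "lambda_S S m = 1"
proof -
  have f: "filter_mset (\<lambda>p. p \<in> S) (prime_factorization m) = {#}"
  proof (rule multiset_eqI)
    fix x show "count (filter_mset (\<lambda>p. p \<in> S) (prime_factorization m)) x = count {#} x"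
      using assms not_dvd_imp_multiplicity_0[of x m] by (auto simp: count_prime_factorization)
  qed
  show ?thesis unfolding lambda_S_def f by simp
qed

lemma lambda_one:
  assumes "p0 \<in> S" "prime p0" "multiplicity p0 m = 1" "\<forall>p\<in>S. p \<noteq> p0 \<longrightarrow> \<not> p dvd m"
  shows "lambda_S S m = -1"
proof -
  have f: "filter_mset (\<lambda>p. p \<in> S) (prime_factorization m) = {#p0#}"
  proof (rule multiset_eqI)
    fix x show "count (filter_mset (\<lambda>p. p \<in> S) (prime_factorization m)) x = count {#p0#} x"
      using assms not_dvd_imp_multiplicity_0[of x m] by (auto simp: count_prime_factorization)
  qed
  show ?thesis unfolding lambda_S_def f by simp
qed

lemma residue_fact:
  fixes p x a :: nat
  assumes "prime p" "[x = p + p^2*a - a] (mod p^2)"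
  shows "multiplicity p (x + a) = 1"
proof -
  have p1: "p > 1" using assms(1) prime_gt_1_nat by blast
  have "a \<le> p^2 * a" using p1 by simp
  hence e: "p + p^2*a - a + a = p + p^2 * a" by linarith
  have "[x + a = p + p^2*a - a + a] (mod p^2)" using assms(2) by (rule cong_add) simp
  hence "[x + a = p + p^2*a] (mod p^2)" using e by simp
  hence "(x + a) mod p^2 = (p + p^2*a) mod p^2" unfolding cong_def .
  also have "\<dots> = p mod p^2" by simp
  also have "\<dots> = p" using p1 by (simp add: power2_eq_square)
  finally have m: "(x + a) mod p^2 = p" .
  have "p dvd p^2" by (simp add: power2_eq_square)
  hence "(x + a) mod p = (x + a) mod p^2 mod p" by (simp add: mod_mod_cancel)
  hence "(x + a) mod p = 0" using m by simp
  hence "p dvd x + a" by (simp add: dvd_eq_mod_eq_0)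
  moreover have "\<not> p^2 dvd x + a" using m p1 by (simp add: dvd_eq_mod_eq_0)
  ultimately show ?thesis using multiplicity_eqI[of p 1 "x+a"] by (simp add: numeral_2_eq_2)
qed



theorem lemma2p1:
  fixes k q n :: nat and \<chi> \<chi>t :: "nat \<Rightarrow> real" and P :: "nat set"
  assumes "q > 1"
    and "real_dirichlet_char q \<chi>"
    and "modified_char q \<chi> \<chi>t"
    and "finite P" and "card P = card {m \<in> {n+1..n+k}. \<chi>t m = -1}"
    and "\<forall>p\<in>P. prime p \<and> p > k \<and> \<not> p dvd q"
  shows "\<exists>n'::nat. \<forall>m\<in>{n'+1..n'+k}. \<chi>t m * lambda_S P m = 1"
proof -
  note d = assms(2) and mc = assms(3)
  define B where "B = {m \<in> {n+1..n+k}. \<chi>t m = -1}"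
  have finB: "finite B" unfolding B_def by simp
  obtain \<tau> where tau: "bij_betw \<tau> P B"
    using finite_same_card_bij[OF assms(4) finB] assms(5) unfolding B_def by blast
  define M where "M = (\<Prod>m\<in>{n+1..n+k}. m)"
  have "M > 0" unfolding M_def by (rule prod_pos) auto
  then obtain E c where Ec: "coprime c q" "M dvd q ^ E * c"
    using exists_Ec[of q M] assms(1) by auto
  define Q where "Q = q ^ Suc E"
  have mQ: "m * q dvd Q * c" if "m \<in> {n+1..n+k}" for m
  proof -
    have "m dvd M" unfolding M_def using that by (intro dvd_prodI) auto
    hence "m dvd q ^ E * c" using Ec(2) by (rule dvd_trans)
    hence "m * q dvd q ^ E * c * q" by (rule mult_dvd_mono) simp
    thus ?thesis unfolding Q_def by (simp add: algebra_simps)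
  qed
  define mo where "mo i = (if i = 0 then Q else i^2)" for i :: nat
  define u where "u i = (if i = 0 then 0 else i + i^2 * \<tau> i - \<tau> i)" for i :: nat
  have P0: "0 \<notin> P" using assms(6) by auto
  have cop: "\<forall>i\<in>insert 0 P. \<forall>j\<in>insert 0 P. i \<noteq> j \<longrightarrow> coprime (mo i) (mo j)"
  proof (intro ballI impI)
    fix i j assume ij: "i \<in> insert 0 P" "j \<in> insert 0 P" "i \<noteq> j"
    have cq: "coprime p Q" if "p \<in> P" for p
    proof -
      have "coprime p q" using assms(6) that prime_imp_coprime by blast
      thus ?thesis unfolding Q_def by simp
    qed
    show "coprime (mo i) (mo j)"
    proof (cases "i = 0")
      case True
      then have "j \<in> P" "j \<noteq> 0" using ij by auto
      then show ?thesis using True cq[of j] unfolding mo_def by (simp add: coprime_commute)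
    next
      case False
      then have i: "i \<in> P" using ij by auto
      show ?thesis
      proof (cases "j = 0")
        case True then show ?thesis using False cq[OF i] unfolding mo_def by simp
      next
        case False2: False
        then have "j \<in> P" using ij by auto
        hence "coprime i j" using i assms(6) ij(3) primes_coprime by blast
        then show ?thesis using False False2 unfolding mo_def by simp
      qed
    qed
  qed
  obtain x where x: "\<forall>i\<in>insert 0 P. [x = u i] (mod mo i)"
    using chinese_remainder_nat[OF _ cop] assms(4) by blast
  have "[x = 0] (mod Q)" using x unfolding mo_def u_def by auto
  then obtain t where "x = Q * t" unfolding cong_0_iff by (elim dvdE)
  hence t: "x = t * Q" by (simp add: mult.commute)
  have mult1: "multiplicity p (x + \<tau> p) = 1" if "p \<in> P" for p
  proof -
    have "p \<noteq> 0" using that P0 by metis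
    hence e1: "mo p = p^2" "u p = p + p^2 * \<tau> p - \<tau> p" unfolding mo_def u_def by auto
    have "[x = u p] (mod mo p)" using x that by blast
    hence "[x = p + p^2 * \<tau> p - \<tau> p] (mod p^2)" unfolding e1 .
    moreover have "prime p" using assms(6) that by blast
    ultimately show ?thesis using residue_fact[of p x "\<tau> p"] by blast
  qed
  have pdvd: "p dvd x + \<tau> p" if "p \<in> P" for p
  proof -
    show ?thesis
    proof (rule ccontr)
      assume "\<not> p dvd x + \<tau> p"
      hence "multiplicity p (x + \<tau> p) = 0" by (rule not_dvd_imp_multiplicity_0)
      thus False using mult1[OF that] by simp
    qed
  qed
  have tauB: "\<tau> p \<in> B" if "p \<in> P" for p by (rule bij_betw_apply[OF tau that])
  have ndvd: "\<not> p dvd m + x" if "p \<in> P" "m \<in> {n+1..n+k}" "m \<noteq> \<tau> p" for p m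
  proof
    assume h: "p dvd m + x"
    have tb: "\<tau> p \<in> {n+1..n+k}" using tauB[OF that(1)] unfolding B_def by auto
    have pk: "p > k" using assms(6) that(1) by blast
    show False
    proof (cases "m > \<tau> p")
      case True
      have "p dvd (m + x) - (x + \<tau> p)" using h pdvd[OF that(1)] by (rule dvd_diff_nat)
      moreover have "(m + x) - (x + \<tau> p) = m - \<tau> p" by simp
      ultimately have "p dvd m - \<tau> p" by simp
      moreover have "m - \<tau> p > 0" "m - \<tau> p < k" using True that(2) tb by auto
      ultimately have "p \<le> m - \<tau> p" using dvd_imp_le by blast
      thus False using pk \<open>m - \<tau> p < k\<close> by linarith
    next
      case False
      hence lt: "m < \<tau> p" using that(3) by simp
      have "p dvd (x + \<tau> p) - (m + x)" using pdvd[OF that(1)] h by (rule dvd_diff_nat)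
      moreover have "(x + \<tau> p) - (m + x) = \<tau> p - m" by simp
      ultimately have "p dvd \<tau> p - m" by simp
      moreover have "\<tau> p - m > 0" "\<tau> p - m < k" using lt that(2) tb by auto
      ultimately have "p \<le> \<tau> p - m" using dvd_imp_le by blast
      thus False using pk \<open>\<tau> p - m < k\<close> by linarith
    qed
  qed
  show ?thesis
  proof (intro exI[of _ "n + x"] ballI)
    fix m' assume m': "m' \<in> {n + x + 1..n + x + k}"
    define m where "m = m' - x"
    have mI: "m \<in> {n+1..n+k}" and mm: "m' = m + x" using m' unfolding m_def by auto
    have mpos: "m > 0" using mI by auto
    have chim: "\<chi>t m' = \<chi>t m" unfolding mm t using chit_shift[OF d mc mpos Ec(1) mQ[OF mI]] .
    show "\<chi>t m' * lambda_S P m' = 1"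
    proof (cases "m \<in> B")
      case True
      define p0 where "p0 = inv_into P \<tau> m"
      have im: "m \<in> \<tau> ` P" using tau True by (simp add: bij_betw_def)
      have p0: "p0 \<in> P" "\<tau> p0 = m" unfolding p0_def using im
        by (rule inv_into_into, rule f_inv_into_f)
      have "lambda_S P m' = -1"
      proof (rule lambda_one[OF p0(1)])
        show "prime p0" using assms(6) p0(1) by blast
        show "multiplicity p0 m' = 1" using mult1[OF p0(1)] p0(2) mm by (simp add: add.commute)
        show "\<forall>p\<in>P. p \<noteq> p0 \<longrightarrow> \<not> p dvd m'"
        proof (intro ballI impI)
          fix p assume p: "p \<in> P" "p \<noteq> p0"
          have inj: "inj_on \<tau> P" using tau by (rule bij_betw_imp_inj_on)
          have "\<tau> p \<noteq> \<tau> p0" using inj_onD[OF inj _ p(1) p0(1)] p(2) by blast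
          thus "\<not> p dvd m'" using ndvd[OF p(1) mI] p0(2) mm by auto
        qed
      qed
      moreover have "\<chi>t m = -1" using True unfolding B_def by simp
      ultimately show ?thesis using chim by simp
    next
      case False
      have "\<chi>t m \<noteq> -1" using False mI unfolding B_def by simp
      hence c1: "\<chi>t m = 1" using chit_sign[OF d mc assms(1) mpos] by auto
      have "lambda_S P m' = 1"
      proof (rule lambda_none, intro ballI)
        fix p assume p: "p \<in> P"
        have "\<tau> p \<noteq> m" using tauB[OF p] False by auto
        thus "\<not> p dvd m'" using ndvd[OF p mI] mm by auto
      qed
      then show ?thesis using chim c1 by simp
    qed
  qed
qed

end
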